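(* Let $f:\Sigma^\ast\to\Sigma^\ast$ be a total rational function, let $\sim_R$ be a left congruence of finite index with $\sim_R\sqsubseteq\sim_{R_0}$, and let $L^R$ be the left automaton of the canonical bimachine $B^R$. Then $\sim_{L^0}\sqsubseteq\sim_{L^R}$, where $L^0=L^{R_0}$.
   Context: For words $u,v$, $u\wedge v$ denotes their longest common prefix, $\bigwedge X$ the longest common prefix of a nonempty set $X$, and $\lVert u,v\rVert=|u|+|v|-2|u\wedge v|$. The left syntactic congruence: $u\sim_{R_0}v$ iff for all $w$, $wu\in\mathrm{dom}(f)\Leftrightarrow wv\in\mathrm{dom}(f)$ and $\sup\{\lVert f(wu),f(wv)\rVert: wu\in\mathrm{dom}f\}<\infty$. For a left congruence $\sim_R$ of finite index finer than $\sim_{R_0}$, let $R=\Sigma^\ast/\sim_R$, $r_0=[\varepsilon]$, and for $r=[u]$, $\sigma r=[\sigma u]$ (this is the right automaton of $B^R$). For $r\in R$ and $u\in\Sigma^\ast$ put $\widehat f_r(u)=\bigwedge\{f(uv): v\in r, uv\in\mathrm{dom}(f)\}$ (defined when this set is nonempty). Define the right congruence $u\sim_{L^R}v$ iff for all $\sigma\in\Sigma$, $w\in\Sigma^\ast$, $r\in R$: $\widehat f_{\sigma r}(uw)^{-1}\widehat f_r(uw\sigma)=\widehat f_{\sigma r}(vw)^{-1}\widehat f_r(vw\sigma)$ and $\widehat f_{r_0}(uw)^{-1}f(uw)=\widehat f_{r_0}(vw)^{-1}f(vw)$, whenever these expressions are defined. $L^R$ is the deterministic left automaton $(\Sigma^\ast/\sim_{L^R},[\varepsilon],[u]\xrightarrow{\sigma}[u\sigma])$;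 it is the left automaton of a bimachine $B^R$ with right automaton $R$ defining $f$. $L^0$ denotes $L^{R_0}$ (taking $\sim_R=\sim_{R_0}$). For a deterministic automaton $A$ with initial state $q_0$, $u\sim_A v$ iff $A$ reaches the same states from $q_0$ on $u$ and on $v$ (so $\sim_{L^R}$ is the congruence defining $L^R$). $\sim_1\sqsubseteq\sim_2$ means $u\sim_1v\Rightarrow u\sim_2v$. *)

theory Defs
  imports Main "HOL-Library.Sublist"
begin

inductive run :: "(nat \<times> 'a \<times> 'b list \<times> nat) set \<Rightarrow> nat \<Rightarrow> 'a list \<Rightarrow> 'b list \<Rightarrow> nat \<Rightarrow> bool"
  for D where
  run_Nil: "run D p [] [] p"
| run_Cons: "(p, a, x, p') \<in> D \<Longrightarrow> run D p' u y q \<Longrightarrow> run D p (a # u) (x @ y) q"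

text \<open>A total function is rational iff its graph is exactly the relation realised by a
  finite-state transducer (finite states Q, initial states I, finite transitions D,
  final output function Fin).\<close>
definition rational_function :: "('a list \<Rightarrow> 'b list) \<Rightarrow> bool" where
  "rational_function f \<longleftrightarrow>
     (\<exists>(Q::nat set) I D (Fin :: nat \<Rightarrow> 'b list option).
        finite Q \<and> I \<subseteq> Q \<and> finite D \<and> D \<subseteq> Q \<times> UNIV \<times> UNIV \<times> Q \<and>
        (\<forall>q. Fin q \<noteq> None \<longrightarrow> q \<in> Q) \<and>
        (\<forall>u v. (\<exists>i q y z. i \<in> I \<and> run D i u y q \<and> Fin q = Some z \<and> v = y @ z)
                 \<longleftrightarrow> v = f u))"

definition lcp :: "'a list \<Rightarrow> 'a list \<Rightarrow> 'a list" where
  "lcp u v = Longest_common_prefix {u, v}"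

definition wdist :: "'a list \<Rightarrow> 'a list \<Rightarrow> nat" where
  "wdist u v = length u + length v - 2 * length (lcp u v)"

text \<open>Left quotient a^{-1} b, defined only when a is a prefix of b.\<close>
definition lquot :: "'a list option \<Rightarrow> 'a list option \<Rightarrow> 'a list option" where
  "lquot a b = (case (a, b) of (Some a', Some b') \<Rightarrow>
       (if prefix a' b' then Some (drop (length a') b') else None) | _ \<Rightarrow> None)"

text \<open>Left syntactic congruence ~R0 (dom f = all words, since f is total).\<close>
definition R0 :: "('a list \<Rightarrow> 'b list) \<Rightarrow> 'a list \<Rightarrow> 'a list \<Rightarrow> bool" where
  "R0 f u v \<longleftrightarrow> (\<exists>B. \<forall>w. wdist (f (w @ u)) (f (w @ v)) \<le> B)"

definition left_congruence :: "('a list \<Rightarrow> 'a list \<Rightarrow> bool) \<Rightarrow> bool" where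
  "left_congruence R \<longleftrightarrow> equivp R \<and> (\<forall>w u v. R u v \<longrightarrow> R (w @ u) (w @ v))"

definition finite_index :: "('a list \<Rightarrow> 'a list \<Rightarrow> bool) \<Rightarrow> bool" where
  "finite_index R \<longleftrightarrow> finite (UNIV // {(u, v). R u v})"

definition cls :: "('a list \<Rightarrow> 'a list \<Rightarrow> bool) \<Rightarrow> 'a list \<Rightarrow> 'a list set" where
  "cls R u = {v. R u v}"

definition fhat :: "('a list \<Rightarrow> 'b list) \<Rightarrow> 'a list set \<Rightarrow> 'a list \<Rightarrow> 'b list option" where
  "fhat f r u = (if r = {} then None else Some (Longest_common_prefix {f (u @ v) | v. v \<in> r}))"

text \<open>The right congruence ~L^R. The states r of R are the classes [x]; \<sigma> r = [\<sigma> x].\<close>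
definition LR :: "('a list \<Rightarrow> 'b list) \<Rightarrow> ('a list \<Rightarrow> 'a list \<Rightarrow> bool) \<Rightarrow> 'a list \<Rightarrow> 'a list \<Rightarrow> bool" where
  "LR f R u v \<longleftrightarrow>
     (\<forall>\<sigma> w x.
        lquot (fhat f (cls R (\<sigma> # x)) (u @ w)) (fhat f (cls R x) (u @ w @ [\<sigma>])) =
        lquot (fhat f (cls R (\<sigma> # x)) (v @ w)) (fhat f (cls R x) (v @ w @ [\<sigma>])))
   \<and> (\<forall>w. lquot (fhat f (cls R []) (u @ w)) (Some (f (u @ w))) =
          lquot (fhat f (cls R []) (v @ w)) (Some (f (v @ w))))"

end

theory Submission
  imports Defs
begin

abbreviation LCP where "LCP \<equiv> Longest_common_prefix"

lemma lcp_image_app: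
  assumes "T \<noteq> {}"
  shows "LCP ((@) c ` T) = c @ LCP T"
proof (rule prefix_order.antisym)
  show "prefix (c @ LCP T) (LCP ((@) c ` T))"
    using assms by (auto intro!: Longest_common_prefix_max_prefix Longest_common_prefix_prefix)
  have "prefix c (LCP ((@) c ` T))"
    using assms by (auto intro!: Longest_common_prefix_max_prefix)
  then obtain d where d: "LCP ((@) c ` T) = c @ d" by (auto simp: prefix_def)
  have "\<forall>t\<in>T. prefix d t"
  proof
    fix t assume "t \<in> T"
    then have "prefix (LCP ((@) c ` T)) (c @ t)" by (auto intro!: Longest_common_prefix_prefix)
    then show "prefix d t" using d by simp
  qed
  then have "prefix d (LCP T)" by (rule Longest_common_prefix_max_prefix[OF assms])
  then show "prefix (LCP ((@) c ` T)) (c @ LCP T)" using d by simp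
qed

lemma lcp_mono:
  assumes "A \<subseteq> B" "A \<noteq> {}"
  shows "prefix (LCP B) (LCP A)"
  using assms by (intro Longest_common_prefix_max_prefix) (auto, metis Longest_common_prefix_prefix subsetD)

lemma lcp_self: "lcp x x = x"
  unfolding lcp_def by (rule Longest_common_prefix_eq) (auto simp: prefix_length_le)

lemma lcp_sym: "lcp a b = lcp b a"
  unfolding lcp_def by (simp add: insert_commute)

lemma wdist_sym: "wdist a b = wdist b a"
  unfolding wdist_def by (simp add: lcp_sym)

lemma lcp_pre: "prefix (lcp a b) a" "prefix (lcp a b) b"
  unfolding lcp_def by (auto intro!: Longest_common_prefix_prefix)

lemma wdist_tri: "wdist a c \<le> wdist a b + wdist b c"
proof -
  let ?p = "lcp a b" and ?q = "lcp b c" and ?r = "lcp a c"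
  have pa: "prefix ?p a" and pb: "prefix ?p b" and qb: "prefix ?q b" and qc: "prefix ?q c"
    using lcp_pre by blast+
  have ra: "length ?r \<le> length a" using lcp_pre prefix_length_le by blast
  have rc: "length ?r \<le> length c" using lcp_pre prefix_length_le by blast
  have la: "length ?p \<le> length a" "length ?p \<le> length b" "length ?q \<le> length b" "length ?q \<le> length c"
    using pa pb qb qc prefix_length_le by blast+
  have "min (length ?p) (length ?q) \<le> length ?r"
  proof (cases "prefix ?p ?q")
    case True
    then have "prefix ?p c" using qc prefix_order.trans by blast
    then have "length ?p \<le> length ?r" using pa unfolding lcp_def
      by (intro Longest_common_prefix_longest) auto
    then show ?thesis by simp
  next
    case False
    then have "prefix ?q ?p" using pb qb prefix_same_cases by blast
    then have "prefix ?q a" using pa prefix_order.trans by blast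
    then have "length ?q \<le> length ?r" using qc unfolding lcp_def
      by (intro Longest_common_prefix_longest) auto
    then show ?thesis by simp
  qed
  then show ?thesis unfolding wdist_def using ra rc la by linarith
qed

lemma R0_refl: "R0 f u u"
  unfolding R0_def wdist_def by (auto simp: lcp_self)

lemma R0_sym: "R0 f u v \<Longrightarrow> R0 f v u"
  unfolding R0_def by (metis wdist_sym)

lemma R0_trans: "R0 f u v \<Longrightarrow> R0 f v w \<Longrightarrow> R0 f u w"
  unfolding R0_def
proof -
  assume "\<exists>B. \<forall>z. wdist (f (z @ u)) (f (z @ v)) \<le> B" "\<exists>B. \<forall>z. wdist (f (z @ v)) (f (z @ w)) \<le> B"
  then obtain B1 B2 where "\<forall>z. wdist (f (z @ u)) (f (z @ v)) \<le> B1" "\<forall>z. wdist (f (z @ v)) (f (z @ w)) \<le> B2"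
    by blast
  then have "\<forall>z. wdist (f (z @ u)) (f (z @ w)) \<le> B1 + B2"
    by (meson add_mono order_trans wdist_tri)
  then show "\<exists>B. \<forall>z. wdist (f (z @ u)) (f (z @ w)) \<le> B" by blast
qed

lemma R0_cong: "R0 f u v \<Longrightarrow> R0 f (s # u) (s # v)"
  unfolding R0_def
proof -
  assume "\<exists>B. \<forall>z. wdist (f (z @ u)) (f (z @ v)) \<le> B"
  then obtain B where "\<forall>z. wdist (f (z @ u)) (f (z @ v)) \<le> B" by blast
  then have "\<forall>z. wdist (f (z @ s # u)) (f (z @ s # v)) \<le> B"
    by (metis append.assoc append_Cons append_Nil)
  then show "\<exists>B. \<forall>z. wdist (f (z @ s # u)) (f (z @ s # v)) \<le> B" by blast
qed

definition H where "H f u w = LCP {f (u @ y) | y. R0 f w y}"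
definition g where "g f u w = drop (length (H f u w)) (f (u @ w))"

lemma fhat_R0: "fhat f (cls (R0 f) w) u = Some (H f u w)"
  unfolding fhat_def cls_def H_def using R0_refl[of f w] by auto

lemma H_class: "R0 f w y \<Longrightarrow> H f u y = H f u w"
  unfolding H_def by (metis R0_sym R0_trans)

lemma H_pre: "prefix (H f u w) (f (u @ w))"
  unfolding H_def using R0_refl[of f w] by (auto intro!: Longest_common_prefix_prefix)

lemma f_split: "f (u @ w) = H f u w @ g f u w"
  unfolding g_def using H_pre[of f u w] by (metis append_take_drop_id prefix_def append_eq_conv_conj)

lemma H_step: "prefix (H f u (s # w)) (H f (u @ [s]) w)"
proof -
  have "{f ((u @ [s]) @ y) |y. R0 f w y} \<subseteq> {f (u @ y) |y. R0 f (s # w) y}"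
    by (auto dest: R0_cong[where s=s])
  moreover have "{f ((u @ [s]) @ y) |y. R0 f w y} \<noteq> {}" using R0_refl[of f w] by auto
  ultimately show ?thesis unfolding H_def by (rule lcp_mono)
qed

lemma lquot_SS: "lquot (Some a) (Some (a @ b)) = Some b"
  unfolding lquot_def by simp

lemma lquot_cancel: "lquot (Some (c @ a)) (Some (c @ b)) = lquot (Some a) (Some b)"
  unfolding lquot_def by simp

lemma LR_right: "LR f R u v \<Longrightarrow> LR f R (u @ z) (v @ z)"
  unfolding LR_def
proof (elim conjE, intro conjI allI)
  fix s w x
  assume "\<forall>s w x. lquot (fhat f (cls R (s # x)) (u @ w)) (fhat f (cls R x) (u @ w @ [s])) =
             lquot (fhat f (cls R (s # x)) (v @ w)) (fhat f (cls R x) (v @ w @ [s]))"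
  from this[rule_format, where s=s and w="z @ w" and x=x]
  show "lquot (fhat f (cls R (s # x)) ((u @ z) @ w)) (fhat f (cls R x) ((u @ z) @ w @ [s])) =
        lquot (fhat f (cls R (s # x)) ((v @ z) @ w)) (fhat f (cls R x) ((v @ z) @ w @ [s]))" by simp
next
  fix w
  assume "\<forall>w. lquot (fhat f (cls R []) (u @ w)) (Some (f (u @ w))) =
          lquot (fhat f (cls R []) (v @ w)) (Some (f (v @ w)))"
  from this[rule_format, of "z @ w"]
  show "lquot (fhat f (cls R []) ((u @ z) @ w)) (Some (f ((u @ z) @ w))) =
        lquot (fhat f (cls R []) ((v @ z) @ w)) (Some (f ((v @ z) @ w)))" by simp
qed

lemma H_step_split: "H f (u @ [s]) w = H f u (s # w) @ drop (length (H f u (s # w))) (H f (u @ [s]) w)"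
  using H_step[of f u s w] by (metis append_take_drop_id prefix_def append_eq_conv_conj)

lemma LR0_step: "LR f (R0 f) u v \<Longrightarrow>
   drop (length (H f u (s # w))) (H f (u @ [s]) w) = drop (length (H f v (s # w))) (H f (v @ [s]) w)"
proof -
  assume "LR f (R0 f) u v"
  then have "lquot (Some (H f u (s # w))) (Some (H f (u @ [s]) w)) =
             lquot (Some (H f v (s # w))) (Some (H f (v @ [s]) w))"
    unfolding LR_def fhat_R0 by (metis append_Nil2 append.simps(1))
  then show ?thesis
    by (metis H_step_split lquot_SS option.inject)
qed

lemma g_eq: "LR f (R0 f) u v \<Longrightarrow> g f u w = g f v w"
proof (induction w arbitrary: u v)
  case Nil
  then have "\<forall>w. lquot (Some (H f (u @ w) [])) (Some (f (u @ w))) = lquot (Some (H f (v @ w) [])) (Some (f (v @ w)))"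
    unfolding LR_def fhat_R0 by simp
  from this[rule_format, of "[]"]
  have "lquot (Some (H f u [])) (Some (f (u @ []))) = lquot (Some (H f v [])) (Some (f (v @ [])))" by simp
  then show ?case by (metis f_split lquot_SS option.inject)
next
  case (Cons s w)
  have IH: "g f (u @ [s]) w = g f (v @ [s]) w" using Cons by (auto intro: LR_right)
  have C: "drop (length (H f u (s # w))) (H f (u @ [s]) w) = drop (length (H f v (s # w))) (H f (v @ [s]) w)"
    by (rule LR0_step[OF Cons.prems])
  have "H f u (s # w) @ g f u (s # w) = H f u (s # w) @ (drop (length (H f u (s # w))) (H f (u @ [s]) w) @ g f (u @ [s]) w)"
    using f_split[of f u "s # w"] f_split[of f "u @ [s]" w] H_step_split[of f u s w] by simp
  then have gu: "g f u (s # w) = drop (length (H f u (s # w))) (H f (u @ [s]) w) @ g f (u @ [s]) w"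
    by (rule same_append_eq[THEN iffD1])
  have "H f v (s # w) @ g f v (s # w) = H f v (s # w) @ (drop (length (H f v (s # w))) (H f (v @ [s]) w) @ g f (v @ [s]) w)"
    using f_split[of f v "s # w"] f_split[of f "v @ [s]" w] H_step_split[of f v s w] by simp
  then have gv: "g f v (s # w) = drop (length (H f v (s # w))) (H f (v @ [s]) w) @ g f (v @ [s]) w"
    by (rule same_append_eq[THEN iffD1])
  show ?case using gu gv IH C by simp
qed

lemma fhatR:
  assumes "left_congruence R" "\<forall>u v. R u v \<longrightarrow> R0 f u v"
  shows "fhat f (cls R x) U = Some (H f U x @ LCP {g f U y | y. R x y})"
proof -
  have rx: "R x x" using assms(1) unfolding left_congruence_def by (meson equivp_reflp)
  have eq: "{f (U @ v) | v. v \<in> cls R x} = (@) (H f U x) ` {g f U y | y. R x y}"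
    unfolding cls_def using assms(2) by (auto simp: f_split H_class image_def) (metis H_class f_split)+
  have ne: "{g f U y | y. R x y} \<noteq> {}" using rx by auto
  have "cls R x \<noteq> {}" using rx by (auto simp: cls_def)
  then show ?thesis unfolding fhat_def eq lcp_image_app[OF ne] by simp
qed

theorem mainTheorem13:
  fixes f :: "('a::finite) list \<Rightarrow> 'a list"
    and R :: "'a list \<Rightarrow> 'a list \<Rightarrow> bool"
  assumes "rational_function f"
    and "left_congruence R"
    and "finite_index R"
    and "\<forall>u v. R u v \<longrightarrow> R0 f u v"
  shows "\<forall>u v. LR f (R0 f) u v \<longrightarrow> LR f R u v"
proof (intro allI impI)
  fix u v assume L0: "LR f (R0 f) u v"
  note FR = fhatR[OF assms(2) assms(4)]
  show "LR f R u v" unfolding LR_def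
  proof (intro conjI allI)
    fix s w x
    have LU: "LR f (R0 f) (u @ w) (v @ w)" using L0 by (rule LR_right)
    have LU2: "LR f (R0 f) (u @ w @ [s]) (v @ w @ [s])" using L0 LR_right by (metis append.assoc)
    have A: "{g f (u @ w) y | y. R (s # x) y} = {g f (v @ w) y | y. R (s # x) y}"
      using g_eq[OF LU] by simp
    have B: "{g f (u @ w @ [s]) y | y. R x y} = {g f (v @ w @ [s]) y | y. R x y}"
      using g_eq[OF LU2] by simp
    have C: "drop (length (H f (u @ w) (s # x))) (H f ((u @ w) @ [s]) x) =
             drop (length (H f (v @ w) (s # x))) (H f ((v @ w) @ [s]) x)"
      using LR0_step[OF LU] by blast
    show "lquot (fhat f (cls R (s # x)) (u @ w)) (fhat f (cls R x) (u @ w @ [s])) =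
          lquot (fhat f (cls R (s # x)) (v @ w)) (fhat f (cls R x) (v @ w @ [s]))"
      unfolding FR
      apply (subst (1 2) H_step_split[where u="_ @ _", simplified])
      using A B C by (simp only: append.assoc lquot_cancel)
  next
    fix w
    have LU: "LR f (R0 f) (u @ w) (v @ w)" using L0 by (rule LR_right)
    have A: "{g f (u @ w) y | y. R [] y} = {g f (v @ w) y | y. R [] y}"
      using g_eq[OF LU] by simp
    have "f (u @ w) = H f (u @ w) [] @ g f (u @ w) []" "f (v @ w) = H f (v @ w) [] @ g f (v @ w) []"
      using f_split[of f "u @ w" "[]"] f_split[of f "v @ w" "[]"] by simp_all
    then show "lquot (fhat f (cls R []) (u @ w)) (Some (f (u @ w))) =
          lquot (fhat f (cls R []) (v @ w)) (Some (f (v @ w)))"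
      unfolding FR using A g_eq[OF LU] by (simp add: lquot_cancel)
  qed
qed

end
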